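(* Let $I=(G,t,t^* )$ be a boosted instance and $B=(q,\tau)$ a boost action with $\tau\ge t^*_q$. Let $\tau_0\ge0$ and let $S$ be an active component at time $\tau_0$ in shadow moat growing on the boosted fingerprint of $\mathrm{WithBoost}(I,B)$. If $q\notin S$ or $\tau\le\tau_0$, then there is an active component $S'$ at time $\tau_0$ in shadow moat growing on $(G,t^* )$ (the run for $I$) with $S'\subseteq S$.
   Context: $G=(V,E,c)$ is an undirected graph with edge costs $c\ge0$; $\delta(S)$ denotes the edges with exactly one endpoint in $S$. Shadow moat growing on $(G,s)$, for $s:V\to\mathbb{R}_{\ge0}$: continuous process in time maintaining a forest (initially empty), its components, and $y_S\ge0$ (initially $0$); at time $\tau$ a component $C$ is active iff some $w\in C$ has $s_w>\tau$, and each active $C$ increases $y_C$ at rate $1$; an edge $e$ between different components with $\sum_{S:e\in\delta(S)}y_S=c_e$ is added and the components merge (ties processed by a fixed rule); stop when nothing is active. A boosted instance is $I=(G,t,t^* )$ with $t,t^*:V\to\mathbb{R}_{\ge0}$ and $t^*\ge t$ pointwise; the run for $I$ is shadow moat growing on $(G,t^* )$. A boost action $B=(q,\tau)$, $\tau\ge t^*_q$, yields $\mathrm{WithBoost}(I,B)=(G,t,t^{*\prime})$ with $t^{*\prime}_q=\tau$ and $t^{*\prime}_v=t^*_v$ for $v\ne q$. *)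

theory Defs
  imports Main "HOL-Library.Extended_Real"
begin

text \<open>Shadow moat growing is simulated as a discrete event process.  The tie rule is fixed by a
  list eo enumerating the edges: among the tight edges the first one in eo is added.\<close>

definition wf_graph :: "'v set \<Rightarrow> 'v set set \<Rightarrow> ('v set \<Rightarrow> real) \<Rightarrow> bool" where
  "wf_graph V E c \<longleftrightarrow> finite V \<and> (\<forall>e\<in>E. e \<subseteq> V \<and> card e = 2) \<and> (\<forall>e\<in>E. 0 \<le> c e)"

record 'v mstate =
  mtime :: real
  comps :: "'v set set"
  fam   :: "'v set set"
  yv    :: "'v set \<Rightarrow> real"

definition in_cut :: "'v set \<Rightarrow> 'v set \<Rightarrow> bool" where
  "in_cut e S \<longleftrightarrow> card (e \<inter> S) = 1"

text \<open>sum of y_S over all S with e \<in> \<delta>(S); y is zero outside the family L of sets that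
  have ever been components\<close>
definition load :: "'v set set \<Rightarrow> ('v set \<Rightarrow> real) \<Rightarrow> 'v set \<Rightarrow> real" where
  "load L y e = (\<Sum>S\<in>L. if in_cut e S then y S else 0)"

definition is_active :: "('v \<Rightarrow> real) \<Rightarrow> real \<Rightarrow> 'v set \<Rightarrow> bool" where
  "is_active s \<tau> C \<longleftrightarrow> (\<exists>w\<in>C. \<tau> < s w)"

definition crosses :: "'v set set \<Rightarrow> 'v set \<Rightarrow> bool" where
  "crosses P e \<longleftrightarrow> (\<exists>C\<in>P. in_cut e C)"

definition mg_init :: "'v set \<Rightarrow> 'v mstate" where
  "mg_init V = \<lparr>mtime = 0, comps = (\<lambda>v. {v}) ` V, fam = (\<lambda>v. {v}) ` V, yv = (\<lambda>_. 0)\<rparr>"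

text \<open>One event: add the first tight edge (merging components); otherwise, if some component
  is active, grow all active components until the next event (tight edge or deactivation);
  otherwise stop (the state is a fixpoint).\<close>
definition mg_step :: "'v set \<Rightarrow> 'v set list \<Rightarrow> ('v set \<Rightarrow> real) \<Rightarrow> ('v \<Rightarrow> real)
    \<Rightarrow> 'v mstate \<Rightarrow> 'v mstate" where
  "mg_step V eo c s st =
    (let \<tau> = mtime st; P = comps st; L = fam st; y = yv st in
     case find (\<lambda>e. crosses P e \<and> load L y e = c e) eo of
       Some e \<Rightarrow>
         (let M = {C\<in>P. e \<inter> C \<noteq> {}}; N = \<Union>M in
          st\<lparr>comps := insert N (P - M), fam := insert N L\<rparr>)
     | None \<Rightarrow>
         (if \<not> (\<exists>C\<in>P. is_active s \<tau> C) then st else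
          (let A = {C\<in>P. is_active s \<tau> C};
               rate = (\<lambda>e. card {C\<in>A. e \<inter> C \<noteq> {}});
               \<Delta> = Min ({s w - \<tau> | w. w \<in> V \<and> \<tau> < s w} \<union>
                        {(c e - load L y e) / real (rate e) | e. e \<in> set eo \<and> crosses P e \<and> 0 < rate e})
           in st\<lparr>mtime := \<tau> + \<Delta>, yv := (\<lambda>S. if S \<in> A then y S + \<Delta> else y S)\<rparr>)))"

definition mg_run :: "'v set \<Rightarrow> 'v set list \<Rightarrow> ('v set \<Rightarrow> real) \<Rightarrow> ('v \<Rightarrow> real) \<Rightarrow> nat \<Rightarrow> 'v mstate" where
  "mg_run V eo c s k = (mg_step V eo c s ^^ k) (mg_init V)"

text \<open>S is an active component at time \<tau>0 of shadow moat growing on (G,s): S is a component of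
  the state reached after processing all events at times \<le> \<tau>0, and S is active at \<tau>0.\<close>
definition active_comp_at :: "'v set \<Rightarrow> 'v set list \<Rightarrow> ('v set \<Rightarrow> real) \<Rightarrow> ('v \<Rightarrow> real)
    \<Rightarrow> real \<Rightarrow> 'v set \<Rightarrow> bool" where
  "active_comp_at V eo c s \<tau>0 S \<longleftrightarrow>
    (\<exists>k. mtime (mg_run V eo c s k) \<le> \<tau>0 \<and>
         (\<tau>0 < mtime (mg_run V eo c s (Suc k)) \<or> mg_run V eo c s (Suc k) = mg_run V eo c s k) \<and>
         S \<in> comps (mg_run V eo c s k) \<and> is_active s \<tau>0 S)"

definition boosted_instance :: "'v set \<Rightarrow> ('v \<Rightarrow> real) \<Rightarrow> ('v \<Rightarrow> real) \<Rightarrow> bool" where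
  "boosted_instance V t ts \<longleftrightarrow> (\<forall>v\<in>V. 0 \<le> t v \<and> t v \<le> ts v)"

definition with_boost :: "('v \<Rightarrow> real) \<Rightarrow> 'v \<Rightarrow> real \<Rightarrow> ('v \<Rightarrow> real)" where
  "with_boost ts q \<tau> = ts(q := \<tau>)"

end

theory Submission imports Defs begin

locale mgr =
  fixes V :: "'v set" and eo :: "'v set list" and c :: "'v set \<Rightarrow> real" and s :: "'v \<Rightarrow> real"
  assumes finV: "finite V"
    and edges: "\<And>e. e \<in> set eo \<Longrightarrow> e \<subseteq> V \<and> card e = 2"
    and cpos: "\<And>e. e \<in> set eo \<Longrightarrow> 0 \<le> c e"
begin

abbreviation "step \<equiv> mg_step V eo c s"
abbreviation "R k \<equiv> mg_run V eo c s k"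

definition actset :: "'v mstate \<Rightarrow> 'v set set" where
  "actset st = {C\<in>comps st. is_active s (mtime st) C}"

definition Dl :: "'v mstate \<Rightarrow> real" where
  "Dl st = Min ({s w - mtime st | w. w \<in> V \<and> mtime st < s w} \<union>
     {(c e - load (fam st) (yv st) e) / real (card {C\<in>actset st. e \<inter> C \<noteq> {}}) | e. e \<in> set eo \<and> crosses (comps st) e \<and> 0 < card {C\<in>actset st. e \<inter> C \<noteq> {}}})"

abbreviation "fnd st \<equiv> find (\<lambda>e. crosses (comps st) e \<and> load (fam st) (yv st) e = c e) eo"

lemma step_merge:
  "fnd st = Some e \<Longrightarrow> step st = st\<lparr>comps := insert (\<Union>{C\<in>comps st. e\<inter>C\<noteq>{}}) (comps st - {C\<in>comps st. e\<inter>C\<noteq>{}}),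
      fam := insert (\<Union>{C\<in>comps st. e\<inter>C\<noteq>{}}) (fam st)\<rparr>"
  by (simp add: mg_step_def Let_def)

lemma step_stop:
  "fnd st = None \<Longrightarrow> \<not>(\<exists>C\<in>comps st. is_active s (mtime st) C) \<Longrightarrow> step st = st"
  by (simp add: mg_step_def Let_def)

lemma step_grow:
  "fnd st = None \<Longrightarrow> (\<exists>C\<in>comps st. is_active s (mtime st) C) \<Longrightarrow>
   step st = st\<lparr>mtime := mtime st + Dl st, yv := (\<lambda>S. if S \<in> actset st then yv st S + Dl st else yv st S)\<rparr>"
  unfolding mg_step_def Let_def actset_def[symmetric] Dl_def[symmetric] by simp

lemma R_Suc: "R (Suc k) = step (R k)"
  by (simp add: mg_run_def)

lemma R_0: "R 0 = mg_init V"
  by (simp add: mg_run_def)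


definition part :: "'v set set \<Rightarrow> bool" where
  "part P \<longleftrightarrow> (\<forall>C\<in>P. C \<noteq> {} \<and> C \<subseteq> V) \<and> (\<forall>C\<in>P. \<forall>D\<in>P. C \<noteq> D \<longrightarrow> C \<inter> D = {}) \<and> \<Union>P = V"

lemma part_ex: "part P \<Longrightarrow> u \<in> V \<Longrightarrow> \<exists>C\<in>P. u \<in> C"
  unfolding part_def by blast

lemma part_uniq: "part P \<Longrightarrow> C \<in> P \<Longrightarrow> D \<in> P \<Longrightarrow> u \<in> C \<Longrightarrow> u \<in> D \<Longrightarrow> C = D"
  unfolding part_def by blast

lemma part_sub: "part P \<Longrightarrow> C \<in> P \<Longrightarrow> C \<subseteq> V"
  unfolding part_def by blast

lemma part_finite: "part P \<Longrightarrow> finite P"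
  unfolding part_def using finV by (metis Sup_le_iff finite_UnionD order_refl) 

lemma edge_pair: "e \<in> set eo \<Longrightarrow> \<exists>u v. e = {u,v} \<and> u \<noteq> v \<and> u \<in> V \<and> v \<in> V"
  using edges[of e] by (auto simp: card_2_iff)

lemma in_cut_pair: "u \<noteq> v \<Longrightarrow> in_cut {u,v} S \<longleftrightarrow> (u \<in> S \<longleftrightarrow> v \<notin> S)"
  unfolding in_cut_def
  by (cases "u \<in> S"; cases "v \<in> S") (auto simp: Int_insert_left)

lemma crosses_iff: "part P \<Longrightarrow> u \<noteq> v \<Longrightarrow> u \<in> V \<Longrightarrow> v \<in> V \<Longrightarrow>
   crosses P {u,v} \<longleftrightarrow> \<not>(\<exists>C\<in>P. u \<in> C \<and> v \<in> C)"
proof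
  assume p: "part P" and uv: "u \<noteq> v" "u \<in> V" "v \<in> V"
  { assume "crosses P {u,v}"
    then obtain C where C: "C \<in> P" "u \<in> C \<longleftrightarrow> v \<notin> C"
      using uv unfolding crosses_def by (auto simp: in_cut_pair)
    show "\<not>(\<exists>C\<in>P. u \<in> C \<and> v \<in> C)"
    proof
      assume "\<exists>C\<in>P. u \<in> C \<and> v \<in> C"
      then obtain D where "D \<in> P" "u \<in> D" "v \<in> D" by blast
      then show False using C part_uniq[OF p] by metis
    qed }
  { assume n: "\<not>(\<exists>C\<in>P. u \<in> C \<and> v \<in> C)"
    obtain C where "C \<in> P" "u \<in> C" using part_ex[OF p uv(2)] by blast
    then show "crosses P {u,v}" using n uv unfolding crosses_def by (auto simp: in_cut_pair) }
qed

definition inv :: "'v mstate \<Rightarrow> bool" where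
  "inv st \<longleftrightarrow> part (comps st) \<and> finite (fam st) \<and> comps st \<subseteq> fam st \<and>
     (\<forall>S\<in>fam st. \<exists>C\<in>comps st. S \<subseteq> C) \<and>
     (\<forall>S. S \<notin> fam st \<longrightarrow> yv st S = 0) \<and> (\<forall>S. 0 \<le> yv st S) \<and>
     (\<forall>e\<in>set eo. crosses (comps st) e \<longrightarrow> load (fam st) (yv st) e \<le> c e)"

definition ag :: "'v mstate \<Rightarrow> 'v \<Rightarrow> real" where
  "ag st u = (\<Sum>S\<in>fam st. if u \<in> S then yv st S else 0)"

lemma load_ag:
  assumes "inv st" "u \<noteq> v" "u \<in> V" "v \<in> V" "crosses (comps st) {u,v}"
  shows "load (fam st) (yv st) {u,v} = ag st u + ag st v"
proof -
  have p: "part (comps st)" using assms(1) by (simp add: inv_def)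
  have nb: "\<not> (u \<in> S \<and> v \<in> S)" if SF: "S \<in> fam st" for S
  proof
    assume "u \<in> S \<and> v \<in> S"
    moreover obtain C where "C \<in> comps st" "S \<subseteq> C" using SF assms(1) by (auto simp: inv_def)
    ultimately show False using assms(5) crosses_iff[OF p assms(2-4)] by blast
  qed
  have "load (fam st) (yv st) {u,v} = (\<Sum>S\<in>fam st. (if u \<in> S then yv st S else 0) + (if v \<in> S then yv st S else 0))"
    unfolding load_def
    by (rule sum.cong) (use nb assms(2) in \<open>auto simp: in_cut_pair\<close>)
  also have "\<dots> = ag st u + ag st v" by (simp add: sum.distrib ag_def)
  finally show ?thesis .
qed

lemma load_grow:
  assumes "inv st" "e \<in> set eo" "crosses (comps st) e" "A \<subseteq> comps st"
  shows "load (fam st) (\<lambda>S. if S \<in> A then yv st S + d else yv st S) e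
       = load (fam st) (yv st) e + d * real (card {C\<in>A. e \<inter> C \<noteq> {}})"
proof -
  obtain u v where e: "e = {u,v}" "u \<noteq> v" "u \<in> V" "v \<in> V" using edge_pair[OF assms(2)] by blast
  have p: "part (comps st)" and fin: "finite (fam st)" and AL: "A \<subseteq> fam st"
    using assms(1,4) by (auto simp: inv_def)
  have cC: "in_cut e C \<longleftrightarrow> e \<inter> C \<noteq> {}" if "C \<in> comps st" for C
    using that assms(3) crosses_iff[OF p e(2-4)] e by (auto simp: in_cut_pair)
  have "load (fam st) (\<lambda>S. if S \<in> A then yv st S + d else yv st S) e
     = (\<Sum>S\<in>fam st. (if in_cut e S then yv st S else 0) + (if S \<in> {C\<in>A. e \<inter> C \<noteq> {}} then d else 0))"
    unfolding load_def
    by (rule sum.cong) (use cC assms(4) in auto)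
  also have "\<dots> = load (fam st) (yv st) e + (\<Sum>S\<in>fam st. if S \<in> {C\<in>A. e \<inter> C \<noteq> {}} then d else 0)"
    by (simp add: sum.distrib load_def)
  also have "(\<Sum>S\<in>fam st. if S \<in> {C\<in>A. e \<inter> C \<noteq> {}} then d else 0) = d * real (card {C\<in>A. e \<inter> C \<noteq> {}})"
  proof -
    have "{C\<in>A. e \<inter> C \<noteq> {}} \<subseteq> fam st" using AL by auto
    then have "(\<Sum>S\<in>fam st. if S \<in> {C\<in>A. e \<inter> C \<noteq> {}} then d else 0) = (\<Sum>S\<in>{C\<in>A. e \<inter> C \<noteq> {}}. d)"
      using fin by (simp add: sum.If_cases Int_absorb1)
    then show ?thesis by simp
  qed
  finally show ?thesis .
qed

lemma fnd_Some: "fnd st = Some e \<Longrightarrow> e \<in> set eo \<and> crosses (comps st) e \<and> load (fam st) (yv st) e = c e"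
  by (auto simp: find_Some_iff)

lemma fnd_None: "fnd st = None \<Longrightarrow> e \<in> set eo \<Longrightarrow> crosses (comps st) e \<Longrightarrow> load (fam st) (yv st) e \<noteq> c e"
  by (auto simp: find_None_iff)

lemma merge_facts:
  assumes "inv st" "fnd st = Some e"
  obtains u v Cu Cv where "e = {u,v}" "u \<noteq> v" "u \<in> V" "v \<in> V" "Cu \<in> comps st" "Cv \<in> comps st"
    "u \<in> Cu" "v \<in> Cv" "Cu \<noteq> Cv" "{C\<in>comps st. e \<inter> C \<noteq> {}} = {Cu,Cv}"
    "e \<in> set eo" "crosses (comps st) e" "load (fam st) (yv st) e = c e"
proof -
  have f: "e \<in> set eo" "crosses (comps st) e" "load (fam st) (yv st) e = c e" using fnd_Some[OF assms(2)] by auto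
  obtain u v where e: "e = {u,v}" "u \<noteq> v" "u \<in> V" "v \<in> V" using edge_pair[OF f(1)] by blast
  have p: "part (comps st)" using assms(1) by (simp add: inv_def)
  obtain Cu where Cu: "Cu \<in> comps st" "u \<in> Cu" using part_ex[OF p e(3)] by blast
  obtain Cv where Cv: "Cv \<in> comps st" "v \<in> Cv" using part_ex[OF p e(4)] by blast
  have ne: "Cu \<noteq> Cv" using crosses_iff[OF p e(2-4)] f(2) e(1) Cu Cv by blast
  have M: "{C\<in>comps st. e \<inter> C \<noteq> {}} = {Cu,Cv}"
    using Cu Cv e(1) part_uniq[OF p] by blast
  show ?thesis using that e Cu Cv ne M f by blast
qed

lemma inv_init: "inv (mg_init V)"
proof -
  have "part ((\<lambda>v. {v}) ` V)" unfolding part_def by auto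
  moreover have "load ((\<lambda>v. {v}) ` V) (\<lambda>_. 0) e \<le> c e" if "e \<in> set eo" for e
    using cpos[OF that] by (simp add: load_def)
  ultimately show ?thesis using finV unfolding inv_def mg_init_def by auto
qed

lemma Dl_props:
  assumes "inv st" "fnd st = None" "\<exists>C\<in>comps st. is_active s (mtime st) C"
  shows "0 < Dl st" "\<And>w. w \<in> V \<Longrightarrow> mtime st < s w \<Longrightarrow> Dl st \<le> s w - mtime st"
    "\<And>e. e \<in> set eo \<Longrightarrow> crosses (comps st) e \<Longrightarrow> 0 < card {C\<in>actset st. e \<inter> C \<noteq> {}} \<Longrightarrow>
       Dl st \<le> (c e - load (fam st) (yv st) e) / real (card {C\<in>actset st. e \<inter> C \<noteq> {}})"
    "(\<exists>w\<in>V. mtime st < s w \<and> Dl st = s w - mtime st) \<or>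
     (\<exists>e\<in>set eo. crosses (comps st) e \<and> 0 < card {C\<in>actset st. e \<inter> C \<noteq> {}} \<and>
        Dl st = (c e - load (fam st) (yv st) e) / real (card {C\<in>actset st. e \<inter> C \<noteq> {}}))"
proof -
  define X1 where "X1 = {s w - mtime st | w. w \<in> V \<and> mtime st < s w}"
  define X2 where "X2 = {(c e - load (fam st) (yv st) e) / real (card {C\<in>actset st. e \<inter> C \<noteq> {}}) | e. e \<in> set eo \<and> crosses (comps st) e \<and> 0 < card {C\<in>actset st. e \<inter> C \<noteq> {}}}"
  have D: "Dl st = Min (X1 \<union> X2)" unfolding Dl_def X1_def X2_def ..
  have f1: "finite X1" unfolding X1_def using finV by (intro finite_image_set) auto
  have f2: "finite X2" unfolding X2_def by (intro finite_image_set) auto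
  have p: "part (comps st)" using assms(1) by (simp add: inv_def)
  obtain C w where "C \<in> comps st" "w \<in> C" "mtime st < s w" using assms(3) unfolding is_active_def by blast
  then have "w \<in> V" using part_sub[OF p] by blast
  then have ne: "X1 \<union> X2 \<noteq> {}" unfolding X1_def using \<open>mtime st < s w\<close> by blast
  have pos: "0 < x" if "x \<in> X1 \<union> X2" for x
  proof -
    { assume "x \<in> X2"
      then obtain e where e: "e \<in> set eo" "crosses (comps st) e" "0 < card {C\<in>actset st. e \<inter> C \<noteq> {}}"
        and x: "x = (c e - load (fam st) (yv st) e) / real (card {C\<in>actset st. e \<inter> C \<noteq> {}})"
        unfolding X2_def by blast
      have "load (fam st) (yv st) e \<le> c e" using assms(1) e by (auto simp: inv_def)
      moreover have "load (fam st) (yv st) e \<noteq> c e" using fnd_None[OF assms(2) e(1,2)] .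
      ultimately have "0 < x" using x e(3) by simp }
    then show ?thesis using that unfolding X1_def by auto
  qed
  show "0 < Dl st" unfolding D using pos Min_in[OF _ ne] f1 f2 by blast
  show "\<And>w. w \<in> V \<Longrightarrow> mtime st < s w \<Longrightarrow> Dl st \<le> s w - mtime st"
    unfolding D X1_def using f1 f2 by (intro Min_le) (auto simp: X1_def)
  show "\<And>e. e \<in> set eo \<Longrightarrow> crosses (comps st) e \<Longrightarrow> 0 < card {C\<in>actset st. e \<inter> C \<noteq> {}} \<Longrightarrow>
       Dl st \<le> (c e - load (fam st) (yv st) e) / real (card {C\<in>actset st. e \<inter> C \<noteq> {}})"
    unfolding D X2_def using f1 f2 by (intro Min_le) (auto simp: X2_def)
  have "Dl st \<in> X1 \<union> X2" unfolding D using Min_in[OF _ ne] f1 f2 by blast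
  then show "(\<exists>w\<in>V. mtime st < s w \<and> Dl st = s w - mtime st) \<or>
     (\<exists>e\<in>set eo. crosses (comps st) e \<and> 0 < card {C\<in>actset st. e \<inter> C \<noteq> {}} \<and>
        Dl st = (c e - load (fam st) (yv st) e) / real (card {C\<in>actset st. e \<inter> C \<noteq> {}}))"
    unfolding X1_def X2_def by blast
qed

lemma inv_merge:
  assumes "inv st" "fnd st = Some e"
  shows "inv (step st)"
proof -
  obtain u v Cu Cv where m: "e = {u,v}" "u \<noteq> v" "u \<in> V" "v \<in> V" "Cu \<in> comps st" "Cv \<in> comps st"
    "u \<in> Cu" "v \<in> Cv" "Cu \<noteq> Cv" "{C\<in>comps st. e \<inter> C \<noteq> {}} = {Cu,Cv}"
    by (rule merge_facts[OF assms])
  define P where "P = comps st"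
  define N where "N = Cu \<union> Cv"
  have st': "step st = st\<lparr>comps := insert N (P - {Cu,Cv}), fam := insert N (fam st)\<rparr>"
    using step_merge[OF assms(2)] m(10) unfolding N_def P_def by simp
  have p: "part P" and I: "finite (fam st)" "P \<subseteq> fam st" "\<forall>S\<in>fam st. \<exists>C\<in>P. S \<subseteq> C"
     "\<forall>S. S \<notin> fam st \<longrightarrow> yv st S = 0" "\<forall>S. 0 \<le> yv st S"
     "\<forall>e\<in>set eo. crosses P e \<longrightarrow> load (fam st) (yv st) e \<le> c e"
    using assms(1) unfolding inv_def P_def by auto
  have cross: "crosses P {u,v}" using fnd_Some[OF assms(2)] m(1) P_def by simp
  have disj: "D \<inter> Cu = {}" "D \<inter> Cv = {}" if "D \<in> P - {Cu,Cv}" for D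
    using that p m(5,6) unfolding part_def P_def by blast+
  have p': "part (insert N (P - {Cu,Cv}))"
  proof -
    have "\<Union>(insert N (P - {Cu,Cv})) = \<Union>P" using m(5,6) unfolding N_def P_def by blast
    moreover have "\<forall>C\<in>insert N (P - {Cu,Cv}). C \<noteq> {} \<and> C \<subseteq> V"
    proof -
      have "N \<noteq> {}" "N \<subseteq> V" using m(5,6,7) p unfolding N_def P_def part_def by auto
      moreover have "\<forall>C\<in>P. C \<noteq> {} \<and> C \<subseteq> V" using p unfolding part_def by blast
      ultimately show ?thesis by blast
    qed
    moreover have "\<forall>C\<in>insert N (P - {Cu,Cv}). \<forall>D\<in>insert N (P - {Cu,Cv}). C \<noteq> D \<longrightarrow> C \<inter> D = {}"
    proof (intro ballI impI)
      fix C D assume C: "C \<in> insert N (P - {Cu,Cv})" and D: "D \<in> insert N (P - {Cu,Cv})" and ne: "C \<noteq> D"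
      have pd: "\<forall>C\<in>P. \<forall>D\<in>P. C \<noteq> D \<longrightarrow> C \<inter> D = {}" using p unfolding part_def by blast
      show "C \<inter> D = {}"
      proof (cases "C = N")
        case True
        then have "D \<in> P - {Cu,Cv}" using D ne by blast
        then show ?thesis using disj True unfolding N_def by blast
      next
        case False
        then have Cp: "C \<in> P - {Cu,Cv}" using C by blast
        show ?thesis
        proof (cases "D = N")
          case True then show ?thesis using disj[OF Cp] unfolding N_def by blast
        next
          case False
          then have "D \<in> P" using D by blast
          then show ?thesis using pd Cp ne by blast
        qed
      qed
    qed
    moreover have "\<Union>P = V" using p unfolding part_def by blast
    ultimately show ?thesis unfolding part_def by simp
  qed
  have NL: "N \<notin> fam st"
  proof
    assume "N \<in> fam st"
    then obtain C where "C \<in> P" "N \<subseteq> C" using I(3) by blast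
    then show False using crosses_iff[OF p m(2-4)] cross m(7,8) unfolding N_def by blast
  qed
  have y0: "yv st N = 0" using I(4) NL by blast
  have lam: "\<forall>S\<in>insert N (fam st). \<exists>C\<in>insert N (P - {Cu,Cv}). S \<subseteq> C"
  proof
    fix S assume "S \<in> insert N (fam st)"
    then show "\<exists>C\<in>insert N (P - {Cu,Cv}). S \<subseteq> C"
    proof
      assume "S \<in> fam st"
      then obtain C where "C \<in> P" "S \<subseteq> C" using I(3) by blast
      then show ?thesis unfolding N_def by (cases "C \<in> {Cu,Cv}") auto
    qed auto
  qed
  have ld: "load (insert N (fam st)) (yv st) f = load (fam st) (yv st) f" for f
    unfolding load_def using I(1) NL y0 by simp
  have cr: "crosses P f" if f: "f \<in> set eo" "crosses (insert N (P - {Cu,Cv})) f" for f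
  proof -
    obtain a b where ab: "f = {a,b}" "a \<noteq> b" "a \<in> V" "b \<in> V" using edge_pair[OF f(1)] by blast
    have h: "\<not>(\<exists>C\<in>insert N (P - {Cu,Cv}). a \<in> C \<and> b \<in> C)" using f(2) unfolding ab(1) crosses_iff[OF p' ab(2-4)] .
    have "\<not>(\<exists>C\<in>P. a \<in> C \<and> b \<in> C)"
    proof
      assume "\<exists>C\<in>P. a \<in> C \<and> b \<in> C"
      then obtain C where C: "C \<in> P" "a \<in> C" "b \<in> C" by blast
      show False
      proof (cases "C \<in> {Cu,Cv}")
        case True
        then have "a \<in> N" "b \<in> N" using C unfolding N_def by auto
        then show False using h by blast
      next
        case False
        then have "C \<in> insert N (P - {Cu,Cv})" using C(1) by blast
        then show False using h C(2,3) by blast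
      qed
    qed
    then show ?thesis unfolding ab(1) crosses_iff[OF p ab(2-4)] .
  qed
  have "part (insert N (P-{Cu,Cv})) \<and> finite (insert N (fam st)) \<and> insert N (P - {Cu,Cv}) \<subseteq> insert N (fam st) \<and>
     (\<forall>S\<in>insert N (fam st). \<exists>C\<in>insert N (P - {Cu,Cv}). S \<subseteq> C) \<and>
     (\<forall>S. S \<notin> insert N (fam st) \<longrightarrow> yv st S = 0) \<and> (\<forall>S. 0 \<le> yv st S) \<and>
     (\<forall>e\<in>set eo. crosses (insert N (P-{Cu,Cv})) e \<longrightarrow> load (insert N (fam st)) (yv st) e \<le> c e)"
  proof (intro conjI)
    show "\<forall>e\<in>set eo. crosses (insert N (P-{Cu,Cv})) e \<longrightarrow> load (insert N (fam st)) (yv st) e \<le> c e"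
      using ld cr I(6) by simp
    show "part (insert N (P-{Cu,Cv}))" by (rule p')
    show "finite (insert N (fam st))" using I(1) by simp
    show "insert N (P - {Cu,Cv}) \<subseteq> insert N (fam st)" using I(2) by blast
    show "\<forall>S\<in>insert N (fam st). \<exists>C\<in>insert N (P - {Cu,Cv}). S \<subseteq> C" by (rule lam)
    show "\<forall>S. S \<notin> insert N (fam st) \<longrightarrow> yv st S = 0" using I(4) by blast
    show "\<forall>S. 0 \<le> yv st S" by (rule I(5))
  qed
  then show ?thesis unfolding st' inv_def by simp
qed

lemma inv_grow:
  assumes "inv st" "fnd st = None" "\<exists>C\<in>comps st. is_active s (mtime st) C"
  shows "inv (step st)"
proof -
  note D = Dl_props[OF assms]
  have st': "step st = st\<lparr>mtime := mtime st + Dl st, yv := (\<lambda>S. if S \<in> actset st then yv st S + Dl st else yv st S)\<rparr>"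
    using step_grow[OF assms(2,3)] .
  have A: "actset st \<subseteq> comps st" unfolding actset_def by auto
  have I: "part (comps st)" "finite (fam st)" "comps st \<subseteq> fam st" "\<forall>S\<in>fam st. \<exists>C\<in>comps st. S \<subseteq> C"
     "\<forall>S. S \<notin> fam st \<longrightarrow> yv st S = 0" "\<forall>S. 0 \<le> yv st S"
     "\<forall>e\<in>set eo. crosses (comps st) e \<longrightarrow> load (fam st) (yv st) e \<le> c e"
    using assms(1) unfolding inv_def by auto
  have ld: "load (fam st) (\<lambda>S. if S \<in> actset st then yv st S + Dl st else yv st S) f \<le> c f"
    if f: "f \<in> set eo" "crosses (comps st) f" for f
  proof -
    have eq: "load (fam st) (\<lambda>S. if S \<in> actset st then yv st S + Dl st else yv st S) f
       = load (fam st) (yv st) f + Dl st * real (card {C\<in>actset st. f \<inter> C \<noteq> {}})"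
      using load_grow[OF assms(1) f A] .
    show ?thesis
    proof (cases "card {C\<in>actset st. f \<inter> C \<noteq> {}} = 0")
      case True then show ?thesis using eq I(7) f by simp
    next
      case False
      then have "Dl st \<le> (c f - load (fam st) (yv st) f) / real (card {C\<in>actset st. f \<inter> C \<noteq> {}})"
        using D(3)[OF f] by simp
      then show ?thesis using eq False by (simp add: pos_le_divide_eq mult.commute)
    qed
  qed
  have "(\<forall>S. S \<notin> fam st \<longrightarrow> (if S \<in> actset st then yv st S + Dl st else yv st S) = 0)"
    using I(3,5) A by auto
  moreover have "\<forall>S. 0 \<le> (if S \<in> actset st then yv st S + Dl st else yv st S)"
    using I(6) D(1) by (simp add: add_nonneg_nonneg less_imp_le)
  ultimately show ?thesis unfolding st' inv_def using I(1-4) ld by simp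
qed

lemma inv_step: "inv st \<Longrightarrow> inv (step st)"
  apply (cases "fnd st")
  subgoal by (cases "\<exists>C\<in>comps st. is_active s (mtime st) C") (simp_all add: inv_grow step_stop)
  subgoal by (simp add: inv_merge)
  done

lemma inv_R: "inv (R k)"
  by (induction k) (simp_all add: R_0 R_Suc inv_init inv_step)

definition act :: "'v mstate \<Rightarrow> 'v \<Rightarrow> bool" where
  "act st u \<longleftrightarrow> (\<exists>C\<in>comps st. u \<in> C \<and> is_active s (mtime st) C)"

lemma merge_N_notin:
  assumes "inv st" "fnd st = Some e"
  shows "\<Union>{C\<in>comps st. e\<inter>C\<noteq>{}} \<notin> comps st" "card (comps (step st)) < card (comps st)"
    "mtime (step st) = mtime st" "yv (step st) = yv st"
proof -
  obtain u v Cu Cv where m: "e = {u,v}" "u \<noteq> v" "u \<in> V" "v \<in> V" "Cu \<in> comps st" "Cv \<in> comps st"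
    "u \<in> Cu" "v \<in> Cv" "Cu \<noteq> Cv" "{C\<in>comps st. e \<inter> C \<noteq> {}} = {Cu,Cv}"
    by (rule merge_facts[OF assms])
  have p: "part (comps st)" using assms(1) by (simp add: inv_def)
  show N: "\<Union>{C\<in>comps st. e\<inter>C\<noteq>{}} \<notin> comps st"
  proof
    assume "\<Union>{C\<in>comps st. e\<inter>C\<noteq>{}} \<in> comps st"
    then have "Cu \<union> Cv \<in> comps st" using m(10) by simp
    then have "Cu \<union> Cv = Cu" "Cu \<union> Cv = Cv" using part_uniq[OF p _ m(5)] part_uniq[OF p _ m(6)] m(7,8) by blast+
    then show False using m(9) by blast
  qed
  have fin: "finite (comps st)" using part_finite[OF p] .
  have "card (comps (step st)) = card (insert (Cu \<union> Cv) (comps st - {Cu,Cv}))"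
    using step_merge[OF assms(2)] m(10) by simp
  also have "\<dots> = card (comps st - {Cu,Cv}) + 1" using N m(10) fin by (simp add: card_insert_if)
  also have "\<dots> = card (comps st) - 2 + 1" using m(5,6,9) fin by (simp add: card_Diff_subset)
  also have "\<dots> < card (comps st)"
  proof -
    have "card {Cu,Cv} \<le> card (comps st)" using m(5,6) fin by (intro card_mono) auto
    then show ?thesis using m(9) by simp
  qed
  finally show "card (comps (step st)) < card (comps st)" .
  show "mtime (step st) = mtime st" "yv (step st) = yv st" using step_merge[OF assms(2)] by simp_all
qed

lemma mtime_step: assumes "inv st" shows "mtime st \<le> mtime (step st)"
proof (cases "fnd st")
  case None
  show ?thesis
  proof (cases "\<exists>C\<in>comps st. is_active s (mtime st) C")
    case True
    then show ?thesis using step_grow[OF None True] Dl_props(1)[OF assms None True] by simp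
  next
    case False
    then show ?thesis using step_stop[OF None False] by simp
  qed
next
  case (Some e)
  then show ?thesis using step_merge[OF Some] by simp
qed

lemma mtime_mono: "i \<le> j \<Longrightarrow> mtime (R i) \<le> mtime (R j)"
  by (rule lift_Suc_mono_le[of "\<lambda>k. mtime (R k)"]) (simp_all add: R_Suc mtime_step inv_R)

definition live :: "'v mstate \<Rightarrow> nat" where
  "live st = card {w\<in>V. mtime st < s w}"

definition mu :: "'v mstate \<Rightarrow> nat" where
  "mu st = 3 * card (comps st) + 3 * live st + (if fnd st = None then 1 else 0)"

lemma mu_dec:
  assumes "inv st" "step st \<noteq> st"
  shows "mu (step st) < mu st"
proof (cases "fnd st")
  case (Some e)
  note m = merge_N_notin[OF assms(1) Some]
  have "live (step st) = live st" using m(3) by (simp add: live_def)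
  then show ?thesis using m(2) Some unfolding mu_def by simp
next
  case None
  then have a: "\<exists>C\<in>comps st. is_active s (mtime st) C" using assms(2) step_stop by blast
  note D = Dl_props[OF assms(1) None a]
  note st' = step_grow[OF None a]
  have cs: "comps (step st) = comps st" using st' by simp
  have sub: "{w\<in>V. mtime (step st) < s w} \<subseteq> {w\<in>V. mtime st < s w}" using st' D(1) by auto
  have fl: "finite {w\<in>V. mtime st < s w}" using finV by simp
  have lv: "live (step st) \<le> live st" unfolding live_def using card_mono[OF fl sub] .
  from D(4) show ?thesis
  proof
    assume "\<exists>w\<in>V. mtime st < s w \<and> Dl st = s w - mtime st"
    then obtain w where w: "w \<in> V" "mtime st < s w" "Dl st = s w - mtime st" by blast
    have "w \<notin> {w\<in>V. mtime (step st) < s w}" using st' w by simp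
    then have "{w\<in>V. mtime (step st) < s w} \<subset> {w\<in>V. mtime st < s w}" using sub w by blast
    then have "live (step st) < live st" unfolding live_def using psubset_card_mono[OF fl] by blast
    then show ?thesis unfolding mu_def cs using None by simp
  next
    assume "\<exists>e\<in>set eo. crosses (comps st) e \<and> 0 < card {C\<in>actset st. e \<inter> C \<noteq> {}} \<and>
        Dl st = (c e - load (fam st) (yv st) e) / real (card {C\<in>actset st. e \<inter> C \<noteq> {}})"
    then obtain e where e: "e \<in> set eo" "crosses (comps st) e" "0 < card {C\<in>actset st. e \<inter> C \<noteq> {}}"
      "Dl st = (c e - load (fam st) (yv st) e) / real (card {C\<in>actset st. e \<inter> C \<noteq> {}})" by blast
    have A: "actset st \<subseteq> comps st" unfolding actset_def by auto
    have "load (fam (step st)) (yv (step st)) e = load (fam st) (yv st) e + Dl st * real (card {C\<in>actset st. e \<inter> C \<noteq> {}})"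
      using load_grow[OF assms(1) e(1,2) A] st' by simp
    also have "\<dots> = c e" using e(3,4) by simp
    finally have "fnd (step st) \<noteq> None" using e(1,2) cs by (auto simp: find_None_iff)
    then have "(if fnd (step st) = None then 1 else 0) = (0::nat)" by simp
    moreover have "(if fnd st = None then 1 else 0) = (1::nat)" using None by simp
    ultimately show ?thesis unfolding mu_def cs using lv by linarith
  qed
qed

lemma ex_fix: "\<exists>K. R (Suc K) = R K"
proof (rule ccontr)
  assume "\<nexists>K. R (Suc K) = R K"
  then have ne: "R (Suc k) \<noteq> R k" for k by blast
  have "mu (R k) + k \<le> mu (R 0)" for k
  proof (induction k)
    case (Suc k)
    have "mu (R (Suc k)) < mu (R k)" using mu_dec[OF inv_R, of k] ne[of k] by (simp add: R_Suc)
    then show ?case using Suc by simp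
  qed simp
  from this[of "Suc (mu (R 0))"] show False by simp
qed

lemma fix_stays: "R (Suc K) = R K \<Longrightarrow> K \<le> j \<Longrightarrow> R j = R K"
proof (induction j)
  case (Suc j)
  then show ?case by (cases "K = Suc j") (simp_all add: R_Suc)
qed simp

definition fin :: "real \<Rightarrow> nat \<Rightarrow> bool" where
  "fin x k \<longleftrightarrow> mtime (R k) \<le> x \<and> (x < mtime (R (Suc k)) \<or> R (Suc k) = R k)"

lemma fin_ex: "0 \<le> x \<Longrightarrow> \<exists>k. fin x k"
proof -
  assume x: "0 \<le> x"
  obtain K where K: "R (Suc K) = R K" using ex_fix by blast
  define k where "k = (LEAST k. x < mtime (R (Suc k)) \<or> R (Suc k) = R k)"
  have k1: "x < mtime (R (Suc k)) \<or> R (Suc k) = R k" unfolding k_def by (rule LeastI[of _ K]) (use K in simp)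
  have "mtime (R k) \<le> x"
  proof (cases k)
    case 0 then show ?thesis using x by (simp add: R_0 mg_init_def)
  next
    case (Suc j)
    then have "j < k" by simp
    then have "\<not>(x < mtime (R (Suc j)) \<or> R (Suc j) = R j)" unfolding k_def by (rule not_less_Least)
    then show ?thesis using Suc by simp
  qed
  then show ?thesis using k1 unfolding fin_def by blast
qed

lemma fin_order:
  assumes "fin x1 k1" "fin x2 k2" "x1 \<le> x2"
  shows "R k1 = R k2 \<or> (k1 < k2 \<and> x1 < mtime (R (Suc k1)))"
proof (cases "R (Suc k1) = R k1")
  case True
  show ?thesis
  proof (cases "k1 \<le> k2")
    case True then show ?thesis using fix_stays[OF \<open>R (Suc k1) = R k1\<close>] by metis
  next
    case False
    then have "Suc k2 \<le> k1" by simp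
    then have "mtime (R (Suc k2)) \<le> x2" using mtime_mono[of "Suc k2" k1] assms unfolding fin_def by linarith
    then have "R (Suc k2) = R k2" using assms(2) unfolding fin_def by linarith
    then show ?thesis using fix_stays[of k2 k1] False by simp
  qed
next
  case False
  then have x1: "x1 < mtime (R (Suc k1))" using assms(1) unfolding fin_def by blast
  show ?thesis
  proof (cases "k1 < k2")
    case True then show ?thesis using x1 by blast
  next
    case nl: False
    show ?thesis
    proof (cases "k1 = k2")
      case True then show ?thesis by simp
    next
      case False
      then have "Suc k2 \<le> k1" using nl by simp
      then have "mtime (R (Suc k2)) \<le> x2" using mtime_mono[of "Suc k2" k1] assms unfolding fin_def by linarith
      then have "R (Suc k2) = R k2" using assms(2) unfolding fin_def by linarith
      then show ?thesis using fix_stays[of k2 k1] \<open>Suc k2 \<le> k1\<close> by simp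
    qed
  qed
qed

lemma fix_char:
  assumes "inv st" "step st = st"
  shows "fnd st = None" "\<not>(\<exists>C\<in>comps st. is_active s (mtime st) C)"
proof -
  show fN: "fnd st = None"
  proof (rule ccontr)
    assume "fnd st \<noteq> None"
    then obtain e where "fnd st = Some e" by blast
    then show False using merge_N_notin(2)[OF assms(1)] assms(2) by simp
  qed
  show "\<not>(\<exists>C\<in>comps st. is_active s (mtime st) C)"
  proof
    assume a: "\<exists>C\<in>comps st. is_active s (mtime st) C"
    have "mtime (step st) = mtime st + Dl st" using step_grow[OF fN a] by simp
    then show False using Dl_props(1)[OF assms(1) fN a] assms(2) by simp
  qed
qed

lemma N_notin_fam:
  assumes "inv st" "fnd st = Some e"
  shows "\<Union>{C\<in>comps st. e\<inter>C\<noteq>{}} \<notin> fam st"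
proof
  obtain u v Cu Cv where m: "e = {u,v}" "u \<noteq> v" "u \<in> V" "v \<in> V" "Cu \<in> comps st" "Cv \<in> comps st"
    "u \<in> Cu" "v \<in> Cv" "Cu \<noteq> Cv" "{C\<in>comps st. e \<inter> C \<noteq> {}} = {Cu,Cv}"
    "e \<in> set eo" "crosses (comps st) e" "load (fam st) (yv st) e = c e"
    by (rule merge_facts[OF assms])
  have p: "part (comps st)" using assms(1) by (simp add: inv_def)
  assume "\<Union>{C\<in>comps st. e\<inter>C\<noteq>{}} \<in> fam st"
  then obtain C where C: "C \<in> comps st" "Cu \<union> Cv \<subseteq> C" using assms(1) m(10) unfolding inv_def by auto
  then have "u \<in> C" "v \<in> C" using m(7,8) by auto
  then show False using m(12) C(1) unfolding m(1) crosses_iff[OF p m(2-4)] by blast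
qed

lemma ag_merge:
  assumes "inv st" "fnd st = Some e"
  shows "ag (step st) u = ag st u"
proof -
  have N: "\<Union>{C\<in>comps st. e\<inter>C\<noteq>{}} \<notin> fam st" by (rule N_notin_fam[OF assms])
  have y0: "yv st (\<Union>{C\<in>comps st. e\<inter>C\<noteq>{}}) = 0" using N assms(1) unfolding inv_def by blast
  have fin: "finite (fam st)" using assms(1) unfolding inv_def by blast
  have fy: "fam (step st) = insert (\<Union>{C\<in>comps st. e\<inter>C\<noteq>{}}) (fam st)" "yv (step st) = yv st"
    using step_merge[OF assms(2)] by simp_all
  show ?thesis unfolding ag_def fy using N y0 fin by (simp add: sum.insert)
qed

lemma sum_ind: "finite L \<Longrightarrow> X \<subseteq> L \<Longrightarrow> (\<Sum>S\<in>L. if S \<in> X then (d::real) else 0) = d * real (card X)"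
proof -
  assume "finite L" "X \<subseteq> L"
  then have "(\<Sum>S\<in>L. if S \<in> X then d else 0) = (\<Sum>S\<in>X. d)"
    by (simp add: sum.If_cases Int_absorb1)
  then show ?thesis by simp
qed

lemma Xu_card:
  assumes "inv st" "u \<in> V"
  shows "card {C\<in>actset st. u \<in> C} = (if act st u then 1 else 0)"
proof -
  have p: "part (comps st)" using assms(1) by (simp add: inv_def)
  show ?thesis
  proof (cases "act st u")
    case True
    then obtain C where C: "C \<in> comps st" "u \<in> C" "is_active s (mtime st) C" unfolding act_def by blast
    have "{C\<in>actset st. u \<in> C} = {C}"
      using C part_uniq[OF p] unfolding actset_def by blast
    then show ?thesis using True by simp
  next
    case False
    then have "{C\<in>actset st. u \<in> C} = {}" unfolding act_def actset_def by blast
    then show ?thesis using False by (metis card.empty)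
  qed
qed

lemma ag_grow:
  assumes "inv st" "fnd st = None" "\<exists>C\<in>comps st. is_active s (mtime st) C" "u \<in> V"
  shows "ag (step st) u = ag st u + (if act st u then Dl st else 0)"
proof -
  have fin: "finite (fam st)" and AL: "actset st \<subseteq> fam st" using assms(1) unfolding inv_def actset_def by auto
  have "ag (step st) u = (\<Sum>S\<in>fam st. (if u \<in> S then yv st S else 0) + (if S \<in> {C\<in>actset st. u \<in> C} then Dl st else 0))"
    unfolding ag_def step_grow[OF assms(2,3)] by (rule sum.cong) auto
  also have "\<dots> = ag st u + Dl st * real (card {C\<in>actset st. u \<in> C})"
    unfolding sum.distrib ag_def using sum_ind[OF fin, of "{C\<in>actset st. u \<in> C}"] AL by auto
  also have "\<dots> = ag st u + (if act st u then Dl st else 0)" using Xu_card[OF assms(1,4)] by simp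
  finally show ?thesis .
qed

lemma rate_act:
  assumes "inv st" "u \<noteq> v" "u \<in> V" "v \<in> V" "crosses (comps st) {u,v}"
  shows "real (card {C\<in>actset st. {u,v} \<inter> C \<noteq> {}}) = (if act st u then 1 else 0) + (if act st v then 1 else 0)"
proof -
  have p: "part (comps st)" using assms(1) by (simp add: inv_def)
  have fin: "finite (actset st)" using part_finite[OF p] unfolding actset_def by simp
  have eq: "{C\<in>actset st. {u,v} \<inter> C \<noteq> {}} = {C\<in>actset st. u \<in> C} \<union> {C\<in>actset st. v \<in> C}" by auto
  have dj: "{C\<in>actset st. u \<in> C} \<inter> {C\<in>actset st. v \<in> C} = {}"
    using assms(5) unfolding crosses_iff[OF p assms(2-4)] actset_def by blast
  have "card {C\<in>actset st. {u,v} \<inter> C \<noteq> {}} = card {C\<in>actset st. u \<in> C} + card {C\<in>actset st. v \<in> C}"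
    unfolding eq using fin dj by (intro card_Un_disjoint) auto
  then show ?thesis using Xu_card[OF assms(1,3)] Xu_card[OF assms(1,4)] by simp
qed

lemma ag_nonneg: "inv st \<Longrightarrow> 0 \<le> ag st u"
  unfolding ag_def inv_def by (auto intro: sum_nonneg)

lemma ag_step_mono:
  assumes "inv st" "u \<in> V" shows "ag st u \<le> ag (step st) u"
proof (cases "fnd st")
  case None
  show ?thesis
  proof (cases "\<exists>C\<in>comps st. is_active s (mtime st) C")
    case True
    then show ?thesis using ag_grow[OF assms(1) None True assms(2)] Dl_props(1)[OF assms(1) None True] by simp
  next
    case False
    then show ?thesis using step_stop[OF None False] by simp
  qed
next
  case (Some e)
  then show ?thesis using ag_merge[OF assms(1) Some] by simp
qed

lemma ag_mono: "i \<le> j \<Longrightarrow> u \<in> V \<Longrightarrow> ag (R i) u \<le> ag (R j) u"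
  by (rule lift_Suc_mono_le[of "\<lambda>k. ag (R k) u"]) (simp_all add: R_Suc ag_step_mono inv_R)

lemma coarsen_step:
  assumes "inv st" "C \<in> comps st" shows "\<exists>D\<in>comps (step st). C \<subseteq> D"
proof (cases "fnd st")
  case None
  show ?thesis
  proof (cases "\<exists>C\<in>comps st. is_active s (mtime st) C")
    case True
    then show ?thesis using step_grow[OF None True] assms(2) by auto
  next
    case False
    then show ?thesis using step_stop[OF None False] assms(2) by auto
  qed
next
  case (Some e)
  show ?thesis
  proof (cases "e \<inter> C \<noteq> {}")
    case True
    then have "C \<subseteq> \<Union>{C\<in>comps st. e\<inter>C\<noteq>{}}" using assms(2) by blast
    then show ?thesis unfolding step_merge[OF Some] by simp
  next
    case False
    then have "C \<in> comps st - {C\<in>comps st. e\<inter>C\<noteq>{}}" using assms(2) by blast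
    then show ?thesis unfolding step_merge[OF Some] by auto
  qed
qed

lemma coarsen: "i \<le> j \<Longrightarrow> C \<in> comps (R i) \<Longrightarrow> \<exists>D\<in>comps (R j). C \<subseteq> D"
proof (induction j rule: dec_induct)
  case base then show ?case by blast
next
  case (step j)
  then obtain D where "D \<in> comps (R j)" "C \<subseteq> D" by blast
  then obtain D' where "D' \<in> comps (R (Suc j))" "D \<subseteq> D'" using coarsen_step[OF inv_R] by (metis R_Suc)
  then show ?case using \<open>C \<subseteq> D\<close> by blast
qed

lemma ag_0: "ag (R 0) u = 0"
proof -
  have "yv (R 0) = (\<lambda>_. 0)" by (simp add: R_0 mg_init_def)
  then show ?thesis unfolding ag_def by (intro sum.neutral ballI) simp
qed

lemma mtime_nonneg: "0 \<le> mtime (R k)"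
  using mtime_mono[of 0 k] by (simp add: R_0 mg_init_def)

definition iag :: "nat \<Rightarrow> real \<Rightarrow> 'v \<Rightarrow> real" where
  "iag k x u = ag (R k) u + (if act (R k) u then x - mtime (R k) else 0)"

lemma iag_ge_ag: "fin x k \<Longrightarrow> ag (R k) u \<le> iag k x u"
  unfolding iag_def fin_def by simp

lemma iag_le_ag: "fin x k \<Longrightarrow> iag k x u \<le> ag (R k) u + (x - mtime (R k))"
  unfolding iag_def fin_def by simp

lemma grow_case:
  assumes "R (Suc k) \<noteq> R k" "mtime (R k) < mtime (R (Suc k))"
  shows "fnd (R k) = None" "\<exists>C\<in>comps (R k). is_active s (mtime (R k)) C"
    "mtime (R (Suc k)) = mtime (R k) + Dl (R k)"
proof -
  show fN: "fnd (R k) = None"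
  proof (rule ccontr)
    assume "fnd (R k) \<noteq> None"
    then obtain e where "fnd (R k) = Some e" by blast
    then show False using merge_N_notin(3)[OF inv_R] assms(2) by (simp add: R_Suc)
  qed
  show a: "\<exists>C\<in>comps (R k). is_active s (mtime (R k)) C"
    using step_stop[OF fN] assms(1) by (auto simp: R_Suc)
  show "mtime (R (Suc k)) = mtime (R k) + Dl (R k)" using step_grow[OF fN a] by (simp add: R_Suc)
qed

lemma iag_le_next:
  assumes "fin x k" "R (Suc k) \<noteq> R k" "u \<in> V"
  shows "iag k x u \<le> ag (R (Suc k)) u"
proof -
  have x: "x < mtime (R (Suc k))" "mtime (R k) \<le> x" using assms(1,2) unfolding fin_def by auto
  note g = grow_case[OF assms(2)]
  have fN: "fnd (R k) = None" and a: "\<exists>C\<in>comps (R k). is_active s (mtime (R k)) C"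
    and m: "mtime (R (Suc k)) = mtime (R k) + Dl (R k)" using g x by auto
  have "ag (R (Suc k)) u = ag (R k) u + (if act (R k) u then Dl (R k) else 0)"
    using ag_grow[OF inv_R fN a assms(3)] by (simp add: R_Suc)
  then show ?thesis unfolding iag_def using x m by (cases "act (R k) u") simp_all
qed

lemma iag_fix: assumes "R (Suc k) = R k" shows "iag k x u = ag (R k) u"
proof -
  have "step (R k) = R k" using assms by (simp only: R_Suc)
  then have "\<not> act (R k) u" using fix_char(2)[OF inv_R, of k] unfolding act_def by blast
  then show ?thesis unfolding iag_def by simp
qed

lemma iag_mono:
  assumes "fin x1 k1" "fin x2 k2" "x1 \<le> x2" "u \<in> V"
  shows "iag k1 x1 u \<le> iag k2 x2 u"
proof -
  have same: "iag k1 x1 u \<le> iag k2 x2 u" if "R k1 = R k2"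
    unfolding iag_def using that assms(3) by simp
  from fin_order[OF assms(1-3)] show ?thesis
  proof
    assume "R k1 = R k2" then show ?thesis by (rule same)
  next
    assume h: "k1 < k2 \<and> x1 < mtime (R (Suc k1))"
    show ?thesis
    proof (cases "R (Suc k1) = R k1")
      case True
      then have "R k2 = R k1" using fix_stays[OF True, of k2] h by linarith
      then show ?thesis using same by simp
    next
      case False
      have "iag k1 x1 u \<le> ag (R (Suc k1)) u" by (rule iag_le_next[OF assms(1) False assms(4)])
      also have "\<dots> \<le> ag (R k2) u" using ag_mono[of "Suc k1" k2 u] h assms(4) by simp
      also have "\<dots> \<le> iag k2 x2 u" by (rule iag_ge_ag[OF assms(2)])
      finally show ?thesis .
    qed
  qed
qed

lemma growth_aux:
  assumes "k1 \<le> j" "mtime (R j) \<le> s w" "C \<in> comps (R k1)" "u \<in> C" "w \<in> C" "u \<in> V"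
  shows "ag (R k1) u + (mtime (R j) - mtime (R k1)) \<le> ag (R j) u"
  using assms(1,2)
proof (induction j rule: dec_induct)
  case base then show ?case by simp
next
  case (step j)
  have mj: "mtime (R j) \<le> s w" using step.prems mtime_mono[of j "Suc j"] by simp
  have IH: "ag (R k1) u + (mtime (R j) - mtime (R k1)) \<le> ag (R j) u" using step.IH mj by blast
  show ?case
  proof (cases "mtime (R j) < mtime (R (Suc j))")
    case False
    then have "mtime (R (Suc j)) = mtime (R j)" using mtime_mono[of j "Suc j"] by simp
    then show ?thesis using IH ag_mono[of j "Suc j" u] assms(6) by simp
  next
    case True
    then have ne: "R (Suc j) \<noteq> R j" by auto
    note g = grow_case[OF ne True]
    obtain D where D: "D \<in> comps (R j)" "C \<subseteq> D" using coarsen[OF step.hyps(1) assms(3)] by blast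
    have "mtime (R j) < s w" using True step.prems by simp
    then have "act (R j) u" unfolding act_def is_active_def using D assms(4,5) by blast
    then have "ag (R (Suc j)) u = ag (R j) u + Dl (R j)"
      using ag_grow[OF inv_R g(1,2) assms(6)] by (simp add: R_Suc)
    then show ?thesis using IH g(3) by simp
  qed
qed

lemma growth:
  assumes "fin x1 k1" "fin x2 k2" "x1 \<le> x2" "x2 \<le> s w" "C \<in> comps (R k1)" "u \<in> C" "w \<in> C" "u \<in> V"
  shows "iag k1 x1 u + (x2 - x1) \<le> iag k2 x2 u"
proof (cases "R k1 = R k2")
  case True
  show ?thesis
  proof (cases "mtime (R k1) < s w")
    case True
    then have "act (R k1) u" unfolding act_def is_active_def using assms(5-7) by blast
    then show ?thesis unfolding iag_def using \<open>R k1 = R k2\<close> by simp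
  next
    case False
    then have "x1 = x2" using assms(1,3,4) unfolding fin_def by simp
    then show ?thesis using True unfolding iag_def by simp
  qed
next
  case False
  then have h: "k1 < k2" using fin_order[OF assms(1-3)] by blast
  have m2: "mtime (R k2) \<le> x2" using assms(2) unfolding fin_def by simp
  have aux: "ag (R k1) u + (mtime (R k2) - mtime (R k1)) \<le> ag (R k2) u"
    using growth_aux[of k1 k2 w C u] h m2 assms(4-8) by simp
  have i1: "iag k1 x1 u \<le> ag (R k1) u + (x1 - mtime (R k1))" by (rule iag_le_ag[OF assms(1)])
  have "ag (R k2) u + (x2 - mtime (R k2)) \<le> iag k2 x2 u"
  proof (cases "mtime (R k2) < s w")
    case True
    obtain D where D: "D \<in> comps (R k2)" "C \<subseteq> D" using coarsen[of k1 k2 C] h assms(5) by auto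
    then have "act (R k2) u" unfolding act_def is_active_def using True assms(6,7) by blast
    then show ?thesis unfolding iag_def by simp
  next
    case False
    then have "x2 = mtime (R k2)" using m2 assms(4) by simp
    then show ?thesis using iag_ge_ag[OF assms(2)] by simp
  qed
  then show ?thesis using aux i1 by simp
qed

lemma slack:
  assumes "fin x k" "e \<in> set eo" "e = {u,v}" "u \<noteq> v" "u \<in> V" "v \<in> V" "crosses (comps (R k)) e"
  shows "iag k x u + iag k x v < c e"
proof -
  have I: "inv (R k)" by (rule inv_R)
  have la: "load (fam (R k)) (yv (R k)) e = ag (R k) u + ag (R k) v"
    using load_ag[OF I assms(4-6)] assms(3,7) by simp
  have le: "load (fam (R k)) (yv (R k)) e \<le> c e" using I assms(2,7) unfolding inv_def by blast
  show ?thesis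
  proof (cases "R (Suc k) = R k")
    case True
    have fN: "fnd (R k) = None" using fix_char(1)[OF I] True by (simp add: R_Suc)
    have "load (fam (R k)) (yv (R k)) e \<noteq> c e" by (rule fnd_None[OF fN assms(2,7)])
    then show ?thesis using iag_fix[OF True] la le by simp
  next
    case False
    have x: "x < mtime (R (Suc k))" "mtime (R k) \<le> x" using assms(1) False unfolding fin_def by auto
    note g = grow_case[OF False]
    have fN: "fnd (R k) = None" and a: "\<exists>C\<in>comps (R k). is_active s (mtime (R k)) C"
      and m: "mtime (R (Suc k)) = mtime (R k) + Dl (R k)" using g x by auto
    have lt: "load (fam (R k)) (yv (R k)) e < c e" using fnd_None[OF fN assms(2,7)] le by simp
    define r where "r = real (card {C\<in>actset (R k). e \<inter> C \<noteq> {}})"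
    have r: "r = (if act (R k) u then 1 else 0) + (if act (R k) v then 1 else 0)"
      unfolding r_def using rate_act[OF I assms(4-6)] assms(3,7) by simp
    have sum: "iag k x u + iag k x v = load (fam (R k)) (yv (R k)) e + (x - mtime (R k)) * r"
      unfolding iag_def la r by (simp add: algebra_simps)
    show ?thesis
    proof (cases "r = 0")
      case True then show ?thesis using sum lt by simp
    next
      case False
      then have rp: "0 < r" "0 < card {C\<in>actset (R k). e \<inter> C \<noteq> {}}" using r r_def by (auto split: if_splits)
      have "Dl (R k) \<le> (c e - load (fam (R k)) (yv (R k)) e) / r"
        unfolding r_def by (rule Dl_props(3)[OF I fN a assms(2,7) rp(2)])
      then have "Dl (R k) * r \<le> c e - load (fam (R k)) (yv (R k)) e" using rp(1) by (simp add: pos_le_divide_eq)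
      moreover have "(x - mtime (R k)) * r < Dl (R k) * r" using x m rp(1) by simp
      ultimately show ?thesis using sum by simp
    qed
  qed
qed

end

locale mgr2 = r1: mgr V eo c s + r2: mgr V eo c s' for V eo c s s' +
  assumes sle: "\<And>w. s w \<le> s' w"
begin

lemma compare:
  "r2.fin (mtime (mg_run V eo c s k)) k' \<Longrightarrow>
    (\<forall>C\<in>comps (mg_run V eo c s k). \<exists>D\<in>comps (mg_run V eo c s' k'). C \<subseteq> D) \<and>
    (\<forall>u\<in>V. r1.ag (mg_run V eo c s k) u \<le> r2.iag k' (mtime (mg_run V eo c s k)) u)"
proof (induction k arbitrary: k')
  case 0
  have p: "r2.part (comps (mg_run V eo c s' k'))" using r2.inv_R unfolding r2.inv_def by blast
  have "\<exists>D\<in>comps (mg_run V eo c s' k'). C \<subseteq> D" if C0: "C \<in> comps (mg_run V eo c s 0)" for C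
  proof -
    obtain v where v: "v \<in> V" "C = {v}" using C0 by (auto simp: r1.R_0 mg_init_def)
    then show ?thesis using r2.part_ex[OF p v(1)] by blast
  qed
  moreover have "r1.ag (mg_run V eo c s 0) u \<le> r2.iag k' (mtime (mg_run V eo c s 0)) u" for u
  proof -
    have "r1.ag (mg_run V eo c s 0) u = 0" by (rule r1.ag_0)
    also have "\<dots> \<le> r2.ag (mg_run V eo c s' k') u" by (rule r2.ag_nonneg[OF r2.inv_R])
    also have "\<dots> \<le> r2.iag k' (mtime (mg_run V eo c s 0)) u" by (rule r2.iag_ge_ag[OF "0.prems"])
    finally show ?thesis .
  qed
  ultimately show ?case by blast
next
  case (Suc k)
  define st where "st = mg_run V eo c s k"
  define x where "x = mtime st"
  have I: "r1.inv st" unfolding st_def by (rule r1.inv_R)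
  have st1: "mg_run V eo c s (Suc k) = r1.step st" unfolding st_def by (rule r1.R_Suc)
  show ?case
  proof (cases "mtime (mg_run V eo c s k) < mtime (mg_run V eo c s (Suc k))")
    case False
    then have mx: "mtime (mg_run V eo c s (Suc k)) = x"
      using r1.mtime_mono[of k "Suc k"] unfolding x_def st_def by simp
    have fk': "r2.fin x k'" using Suc.prems mx by simp
    note IH = Suc.IH[of k', folded st_def x_def, OF fk']
    show ?thesis
    proof (cases "r1.fnd st")
      case None
      have na: "\<not>(\<exists>C\<in>comps st. is_active s (mtime st) C)"
      proof
        assume a: "\<exists>C\<in>comps st. is_active s (mtime st) C"
        have "mtime (r1.step st) = mtime st + r1.Dl st" using r1.step_grow[OF None a] by simp
        then show False using r1.Dl_props(1)[OF I None a] mx st1 x_def by simp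
      qed
      have "mg_run V eo c s (Suc k) = st" using r1.step_stop[OF None na] st1 by simp
      then show ?thesis using IH mx by simp
    next
      case (Some e)
      obtain u v Cu Cv where m: "e = {u,v}" "u \<noteq> v" "u \<in> V" "v \<in> V" "Cu \<in> comps st" "Cv \<in> comps st"
        "u \<in> Cu" "v \<in> Cv" "Cu \<noteq> Cv" "{C\<in>comps st. e \<inter> C \<noteq> {}} = {Cu,Cv}"
        "e \<in> set eo" "crosses (comps st) e" "load (fam st) (yv st) e = c e"
        by (rule r1.merge_facts[OF I Some])
      define st' where "st' = mg_run V eo c s' k'"
      have p2: "r2.part (comps st')" using r2.inv_R unfolding r2.inv_def st'_def by blast
      obtain Du where Du: "Du \<in> comps st'" "Cu \<subseteq> Du" using IH m(5) unfolding st'_def by blast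
      obtain Dv where Dv: "Dv \<in> comps st'" "Cv \<subseteq> Dv" using IH m(6) unfolding st'_def by blast
      have "Du = Dv"
      proof (rule ccontr)
        assume ne: "Du \<noteq> Dv"
        have "\<not>(\<exists>D\<in>comps st'. u \<in> D \<and> v \<in> D)"
        proof
          assume "\<exists>D\<in>comps st'. u \<in> D \<and> v \<in> D"
          then obtain D where "D \<in> comps st'" "u \<in> D" "v \<in> D" by blast
          then have "D = Du" "D = Dv" using r2.part_uniq[OF p2] Du Dv m(7,8) by blast+
          then show False using ne by simp
        qed
        then have cr: "crosses (comps st') e" unfolding m(1) r2.crosses_iff[OF p2 m(2-4)] .
        have "r2.iag k' x u + r2.iag k' x v < c e"
          by (rule r2.slack[OF fk' m(11,1-4)]) (use cr st'_def in simp)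
        moreover have "load (fam st) (yv st) e = r1.ag st u + r1.ag st v"
          using r1.load_ag[OF I m(2-4)] m(1,12) by simp
        moreover have "r1.ag st u \<le> r2.iag k' x u" "r1.ag st v \<le> r2.iag k' x v" using IH m(3,4) by auto
        ultimately show False using m(13) by simp
      qed
      have comps': "comps (mg_run V eo c s (Suc k)) = insert (Cu \<union> Cv) (comps st - {Cu,Cv})"
        using r1.step_merge[OF Some] m(10) st1 by simp
      have "\<forall>C\<in>comps (mg_run V eo c s (Suc k)). \<exists>D\<in>comps st'. C \<subseteq> D"
        unfolding comps' using IH Du Dv \<open>Du = Dv\<close> unfolding st'_def by blast
      moreover have "\<forall>u\<in>V. r1.ag (mg_run V eo c s (Suc k)) u \<le> r2.iag k' x u"
        using IH r1.ag_merge[OF I Some] st1 by simp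
      ultimately show ?thesis using mx unfolding st'_def by simp
    qed
  next
    case True
    have ne: "mg_run V eo c s (Suc k) \<noteq> mg_run V eo c s k" using True by auto
    note g = r1.grow_case[OF ne True, folded st_def]
    define x' where "x' = mtime (mg_run V eo c s (Suc k))"
    have x': "x' = x + r1.Dl st" using g(3) x'_def x_def by simp
    obtain k0 where k0: "r2.fin x k0" using r2.fin_ex r1.mtime_nonneg[of k] unfolding x_def st_def by blast
    note IH = Suc.IH[of k0, folded st_def x_def, OF k0]
    have fk': "r2.fin x' k'" using Suc.prems x'_def by simp
    have xx: "x \<le> x'" using x' r1.Dl_props(1)[OF I g(1,2)] by simp
    have co: "\<exists>D'\<in>comps (mg_run V eo c s' k'). D \<subseteq> D'" if "D \<in> comps (mg_run V eo c s' k0)" for D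
    proof -
      from r2.fin_order[OF k0 fk' xx] show ?thesis
      proof
        assume "mg_run V eo c s' k0 = mg_run V eo c s' k'" then show ?thesis using that by auto
      next
        assume "k0 < k' \<and> x < mtime (mg_run V eo c s' (Suc k0))"
        then show ?thesis using r2.coarsen[of k0 k' D] that by simp
      qed
    qed
    have cs: "comps (mg_run V eo c s (Suc k)) = comps st" using r1.step_grow[OF g(1,2)] st1 by simp
    have part1: "\<forall>C\<in>comps (mg_run V eo c s (Suc k)). \<exists>D\<in>comps (mg_run V eo c s' k'). C \<subseteq> D"
      unfolding cs using IH co by (meson order_trans)
    have "r1.ag (mg_run V eo c s (Suc k)) u \<le> r2.iag k' x' u" if u: "u \<in> V" for u
    proof -
      have agk: "r1.ag (mg_run V eo c s (Suc k)) u = r1.ag st u + (if r1.act st u then r1.Dl st else 0)"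
        using r1.ag_grow[OF I g(1,2) u] st1 by simp
      have ih: "r1.ag st u \<le> r2.iag k0 x u" using IH u by blast
      show ?thesis
      proof (cases "r1.act st u")
        case False
        then show ?thesis using agk ih r2.iag_mono[OF k0 fk' xx u] by simp
      next
        case True
        then obtain C w where C: "C \<in> comps st" "u \<in> C" "w \<in> C" "x < s w"
          unfolding r1.act_def is_active_def x_def by blast
        have p1: "r1.part (comps st)" using I unfolding r1.inv_def by blast
        have wV: "w \<in> V" using r1.part_sub[OF p1 C(1)] C(3) by blast
        have "r1.Dl st \<le> s w - x" using r1.Dl_props(2)[OF I g(1,2) wV] C(4) x_def by simp
        then have "x' \<le> s' w" using x' sle[of w] by simp
        obtain D where D: "D \<in> comps (mg_run V eo c s' k0)" "C \<subseteq> D" using IH C(1) by blast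
        have "r2.iag k0 x u + (x' - x) \<le> r2.iag k' x' u"
          by (rule r2.growth[OF k0 fk' xx \<open>x' \<le> s' w\<close> D(1)]) (use D(2) C u in auto)
        then show ?thesis using agk ih True x' by simp
      qed
    qed
    then show ?thesis using part1 x'_def by simp
  qed
qed

end

theorem mainTheorem15:
  fixes V :: "'v set" and E :: "'v set set" and c :: "'v set \<Rightarrow> real"
    and eo :: "'v set list" and t ts :: "'v \<Rightarrow> real" and q :: 'v
    and \<tau> \<tau>0 :: real and S :: "'v set"
  assumes "wf_graph V E c"
    and "set eo = E" and "distinct eo"
    and "boosted_instance V t ts"
    and "q \<in> V" and "ts q \<le> \<tau>"
    and "0 \<le> \<tau>0"
    and "active_comp_at V eo c (with_boost ts q \<tau>) \<tau>0 S"
    and "q \<notin> S \<or> \<tau> \<le> \<tau>0"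
  shows "\<exists>S'. active_comp_at V eo c ts \<tau>0 S' \<and> S' \<subseteq> S"
proof -
  define s' where "s' = with_boost ts q \<tau>"
  have ax: "mgr V eo c" for s :: "'v \<Rightarrow> real"
    using assms(1,2) unfolding wf_graph_def mgr_def by blast
  interpret M: mgr2 V eo c ts s'
  proof (unfold_locales)
    show "finite V" "\<And>e. e \<in> set eo \<Longrightarrow> e \<subseteq> V \<and> card e = 2" "\<And>e. e \<in> set eo \<Longrightarrow> 0 \<le> c e"
      using assms(1,2) unfolding wf_graph_def by blast+
    show "\<And>w. ts w \<le> s' w" using assms(6) unfolding s'_def with_boost_def by simp
  qed
  obtain k' where k': "M.r2.fin \<tau>0 k'" "S \<in> comps (mg_run V eo c s' k')" "is_active s' \<tau>0 S"
  proof -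
    have "active_comp_at V eo c s' \<tau>0 S" using assms(8) s'_def by simp
    then show ?thesis using that unfolding active_comp_at_def M.r2.fin_def by blast
  qed
  obtain w where w: "w \<in> S" "\<tau>0 < s' w" using k'(3) unfolding is_active_def by blast
  have wq: "w \<noteq> q"
  proof
    assume "w = q"
    then have "\<tau> \<le> \<tau>0" using assms(9) w(1) by blast
    then show False using w(2) \<open>w = q\<close> unfolding s'_def with_boost_def by simp
  qed
  then have tw: "\<tau>0 < ts w" using w(2) unfolding s'_def with_boost_def by simp
  have p2: "M.r2.part (comps (mg_run V eo c s' k'))" using M.r2.inv_R unfolding M.r2.inv_def by blast
  have wV: "w \<in> V" using M.r2.part_sub[OF p2 k'(2)] w(1) by blast
  obtain k where k: "M.r1.fin \<tau>0 k" using M.r1.fin_ex assms(7) by blast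
  have p1: "M.r1.part (comps (mg_run V eo c ts k))" using M.r1.inv_R unfolding M.r1.inv_def by blast
  obtain C where C: "C \<in> comps (mg_run V eo c ts k)" "w \<in> C" using M.r1.part_ex[OF p1 wV] by blast
  obtain k0 where k0: "M.r2.fin (mtime (mg_run V eo c ts k)) k0" using M.r2.fin_ex M.r1.mtime_nonneg by blast
  obtain D where D: "D \<in> comps (mg_run V eo c s' k0)" "C \<subseteq> D" using M.compare[OF k0] C(1) by blast
  have mk: "mtime (mg_run V eo c ts k) \<le> \<tau>0" using k unfolding M.r1.fin_def by simp
  obtain D' where D': "D' \<in> comps (mg_run V eo c s' k')" "D \<subseteq> D'"
  proof -
    from M.r2.fin_order[OF k0 k'(1) mk] show ?thesis
    proof
      assume "mg_run V eo c s' k0 = mg_run V eo c s' k'" then show ?thesis using that D(1) by auto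
    next
      assume "k0 < k' \<and> mtime (mg_run V eo c ts k) < mtime (mg_run V eo c s' (Suc k0))"
      then show ?thesis using M.r2.coarsen[of k0 k' D] D(1) that by auto
    qed
  qed
  have "D' = S" using M.r2.part_uniq[OF p2 D'(1) k'(2)] C(2) D(2) D'(2) w(1) by blast
  then have CS: "C \<subseteq> S" using D(2) D'(2) by blast
  have "active_comp_at V eo c ts \<tau>0 C"
    unfolding active_comp_at_def using k C tw unfolding M.r1.fin_def is_active_def by blast
  then show ?thesis using CS by blast
qed

end
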